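(* Assume the standing setting and let $\epsilon>0$. If $|u^0_i-u^0_{i+1}|\le \epsilon/3^{M}$ for all $i\in\mathbb Z$, then for every coarse index $j$, $|v_0-u_0|\le\epsilon$, i.e. $|w^N_j-u^M_{jr}|\le\epsilon$.
   Context: Standing setting. Let $F:\mathbb R\to\mathbb R$ be continuously differentiable. For a spatial step $\eta>0$, a time step $\tau>0$ and an initial sequence $(z^0_i)_{i\in\mathbb Z}$ of reals, the EFC (Euler forward in time, centered in space) scheme produces $(z^n_i)_{i\in\mathbb Z,\,n\in\mathbb N}$ by $z^{n+1}_i=z^n_i-F'(z^n_i)\frac{\tau}{2\eta}\,(z^n_{i+1}-z^n_{i-1})$. It satisfies the CFL condition if $|F'(z^n_i)|\,\tau/\eta\le 1$ for all $i\in\mathbb Z$, $n\in\mathbb N$. Fix $a\in\mathbb R$, $h>0$, $\Delta t>0$, an integer $N>1$ and an even integer $r\ge 2$; put $k=h/r$, $dt=\Delta t/r$, $M=Nr$. Let $u_0:\mathbb R\to\mathbb R$. The coarse solution $(w^n_j)$ is the EFC scheme with $\eta=h$, $\tau=\Delta t$, $w^0_j=u_0(a+jh)$; the fine solution $(u^n_i)$ is the EFC scheme with $\eta=k$, $\tau=dt$, $u^0_i=u_0(a+ik)$ (so $w^0_j=u^0_{jr}$). Both are assumed to satisfy the CFL condition. Coarse nodes: $x_j=a+jh$. Interpolant: for a fixed coarse index $j$, set $p_1=x_j$, $p_2=x_{j+1}$, $d_1=w^N_j$, $d_2=w^N_{j+1}$, let $q$ be the cubic with $q(0)=p_1$, $q(1)=p_2$,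 $q'(0)=d_1$, $q'(1)=d_2$, and let $v(t)=q'(t)=(6p_1-6p_2+3d_1+3d_2)t^2+(-6p_1+6p_2-4d_1-2d_2)t+d_1$ for $t\in[0,1]$. For $0\le m\le r$ put $v_m=v(m/r)$ and $u_m=u^M_{jr+m}$ (the fine solution at time step $M$ at the fine node $x_j+mk$). (In this statement $u_0$ denotes $u^M_{jr}$, not the initial function.) *)

theory Defs
  imports "HOL-Analysis.Analysis"
begin

text \<open>EFC scheme (Euler forward in time, centered in space).
  Fd plays the role of F'; eta spatial step, tau time step, z0 initial sequence.\<close>
fun efc :: "(real \<Rightarrow> real) \<Rightarrow> real \<Rightarrow> real \<Rightarrow> (int \<Rightarrow> real) \<Rightarrow> nat \<Rightarrow> int \<Rightarrow> real" where
  "efc Fd eta tau z0 0 i = z0 i"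
| "efc Fd eta tau z0 (Suc n) i =
     efc Fd eta tau z0 n i
     - Fd (efc Fd eta tau z0 n i) * (tau / (2 * eta))
       * (efc Fd eta tau z0 n (i + 1) - efc Fd eta tau z0 n (i - 1))"

definition cfl :: "(real \<Rightarrow> real) \<Rightarrow> real \<Rightarrow> real \<Rightarrow> (int \<Rightarrow> real) \<Rightarrow> bool" where
  "cfl Fd eta tau z0 \<longleftrightarrow>
     (\<forall>n i. \<bar>Fd (efc Fd eta tau z0 n i)\<bar> * tau / eta \<le> 1)"

text \<open>Derivative of the Hermite cubic interpolant q with q(0)=p1, q(1)=p2, q'(0)=d1, q'(1)=d2.\<close>
definition herm_v :: "real \<Rightarrow> real \<Rightarrow> real \<Rightarrow> real \<Rightarrow> real \<Rightarrow> real" where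
  "herm_v p1 p2 d1 d2 t =
     (6*p1 - 6*p2 + 3*d1 + 3*d2) * t^2 + (-6*p1 + 6*p2 - 4*d1 - 2*d2) * t + d1"

end

theory Submission
  imports Defs
begin

lemma efc_bounds:
  fixes Fd :: "real \<Rightarrow> real" and z0 :: "int \<Rightarrow> real"
  assumes eta: "eta > 0" and tau: "tau > 0" and c: "cfl Fd eta tau z0"
    and d: "\<And>i. \<bar>z0 i - z0 (i + 1)\<bar> \<le> d"
  shows "(\<forall>i. \<bar>efc Fd eta tau z0 n i - efc Fd eta tau z0 n (i + 1)\<bar> \<le> 3 ^ n * d)
       \<and> (\<forall>i. \<bar>efc Fd eta tau z0 n i - z0 i\<bar> \<le> (3 ^ n - 1) / 2 * d)"
proof (induction n)
  case 0
  then show ?case using d by simp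
next
  case (Suc n)
  define E where "E = efc Fd eta tau z0 n"
  define C where "C = (\<lambda>i. Fd (E i) * (tau / (2 * eta)))"
  have Cb: "\<bar>C i\<bar> \<le> 1/2" for i
  proof -
    have "\<bar>Fd (E i)\<bar> * tau / eta \<le> 1" using c unfolding cfl_def E_def by blast
    moreover have "\<bar>C i\<bar> = (\<bar>Fd (E i)\<bar> * tau / eta) / 2"
      unfolding C_def using eta tau by (simp add: abs_mult)
    ultimately show ?thesis by simp
  qed
  have D: "\<bar>E i - E (i + 1)\<bar> \<le> 3 ^ n * d" for i using Suc E_def by blast
  have Z: "\<bar>E i - z0 i\<bar> \<le> (3 ^ n - 1) / 2 * d" for i using Suc E_def by blast
  have S: "efc Fd eta tau z0 (Suc n) i = E i - C i * (E (i + 1) - E (i - 1))" for i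
    by (simp add: E_def C_def)
  have two: "\<bar>C i * (E (i + 1) - E (i - 1))\<bar> \<le> 3 ^ n * d" for i
  proof -
    have a1: "\<bar>E (i - 1) - E (i - 1 + 1)\<bar> \<le> 3 ^ n * d" by (rule D)
    have a2: "\<bar>E i - E (i + 1)\<bar> \<le> 3 ^ n * d" by (rule D)
    have "\<bar>E (i + 1) - E (i - 1)\<bar> \<le> 2 * (3 ^ n * d)" using a1 a2 by simp
    moreover have "0 \<le> 2 * (3 ^ n * d)" using a2 by linarith
    ultimately have "\<bar>C i\<bar> * \<bar>E (i + 1) - E (i - 1)\<bar> \<le> 1/2 * (2 * (3 ^ n * d))"
      using Cb by (intro mult_mono) auto
    then show ?thesis by (simp add: abs_mult)
  qed
  show ?case
  proof (intro conjI allI)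
    fix i
    have "\<bar>E i - E (i + 1)\<bar> \<le> 3 ^ n * d" by (rule D)
    moreover have "\<bar>C i * (E (i + 1) - E (i - 1))\<bar> \<le> 3 ^ n * d" by (rule two)
    moreover have "\<bar>C (i+1) * (E (i + 1 + 1) - E (i + 1 - 1))\<bar> \<le> 3 ^ n * d" by (rule two)
    ultimately show "\<bar>efc Fd eta tau z0 (Suc n) i - efc Fd eta tau z0 (Suc n) (i + 1)\<bar> \<le> 3 ^ Suc n * d"
      unfolding S by simp
  next
    fix i
    have "\<bar>E i - z0 i\<bar> \<le> (3 ^ n - 1) / 2 * d" by (rule Z)
    moreover have "\<bar>C i * (E (i + 1) - E (i - 1))\<bar> \<le> 3 ^ n * d" by (rule two)
    moreover have "\<bar>E i - C i * (E (i + 1) - E (i - 1)) - z0 i\<bar> \<le> \<bar>E i - z0 i\<bar> + \<bar>C i * (E (i + 1) - E (i - 1))\<bar>"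
      by linarith
    moreover have "(3 ^ n - 1) / 2 * d + 3 ^ n * d = (3 ^ Suc n - 1) / 2 * d"
      by (simp add: field_simps)
    ultimately show "\<bar>efc Fd eta tau z0 (Suc n) i - z0 i\<bar> \<le> (3 ^ Suc n - 1) / 2 * d"
      unfolding S by linarith
  qed
qed

lemma tele:
  fixes f :: "int \<Rightarrow> real"
  assumes "\<And>i. \<bar>f i - f (i + 1)\<bar> \<le> d"
  shows "\<bar>f i - f (i + int m)\<bar> \<le> real m * d"
proof (induction m)
  case 0 then show ?case by simp
next
  case (Suc m)
  have "\<bar>f (i + int m) - f (i + int m + 1)\<bar> \<le> d" by (rule assms)
  with Suc show ?case by (simp add: algebra_simps)
qed

lemma pow_ineq:
  fixes N r :: nat
  assumes "N \<ge> 1" "r \<ge> 1"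
  shows "r * 3 ^ N \<le> (3::nat) ^ (N * r)"
proof -
  have "r - 1 < 2 ^ (r - 1)" by (rule less_exp)
  hence "r \<le> 2 ^ (r - 1)" using assms by linarith
  also have "(2::nat) ^ (r - 1) \<le> 3 ^ (r - 1)" by (simp add: power_mono)
  also have "(3::nat) ^ (r - 1) \<le> 3 ^ (N * (r - 1))"
    using assms by (intro power_increasing) auto
  finally have "r * 3 ^ N \<le> 3 ^ N * 3 ^ (N * (r - 1))" by simp
  also have "\<dots> = 3 ^ (N * r)"
    using assms by (simp add: power_add[symmetric] algebra_simps)
  finally show ?thesis .
qed

theorem proposition7:
  fixes F Fd :: "real \<Rightarrow> real" and a h \<Delta>t \<epsilon> :: real and N r :: nat
    and u\<^sub>0 :: "real \<Rightarrow> real"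
  assumes F_deriv: "\<And>x. (F has_real_derivative Fd x) (at x)"
    and Fd_cont: "continuous_on UNIV Fd"
    and h_pos: "h > 0" and dt_pos: "\<Delta>t > 0"
    and N_gt: "N > 1" and r_even: "even r" and r_ge: "r \<ge> 2"
    and cfl_coarse: "cfl Fd h \<Delta>t (\<lambda>j. u\<^sub>0 (a + real_of_int j * h))"
    and cfl_fine: "cfl Fd (h / real r) (\<Delta>t / real r) (\<lambda>i. u\<^sub>0 (a + real_of_int i * (h / real r)))"
    and eps_pos: "\<epsilon> > 0"
    and small: "\<And>i::int. \<bar>u\<^sub>0 (a + real_of_int i * (h / real r))
                          - u\<^sub>0 (a + real_of_int (i + 1) * (h / real r))\<bar> \<le> \<epsilon> / 3 ^ (N * r)"
  shows "\<forall>j::int.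
     (let w = efc Fd h \<Delta>t (\<lambda>j. u\<^sub>0 (a + real_of_int j * h));
          u = efc Fd (h / real r) (\<Delta>t / real r) (\<lambda>i. u\<^sub>0 (a + real_of_int i * (h / real r)));
          v = herm_v (a + real_of_int j * h) (a + real_of_int (j + 1) * h) (w N j) (w N (j + 1))
      in \<bar>v 0 - u (N * r) (j * int r)\<bar> \<le> \<epsilon> \<and> \<bar>w N j - u (N * r) (j * int r)\<bar> \<le> \<epsilon>)"
proof
  fix j :: int
  define U where "U = (\<lambda>i::int. u\<^sub>0 (a + real_of_int i * (h / real r)))"
  define W where "W = (\<lambda>j::int. u\<^sub>0 (a + real_of_int j * h))"
  define \<delta> where "\<delta> = \<epsilon> / 3 ^ (N * r)"
  have rpos: "real r > 0" using r_ge by simp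
  have WU: "W j = U (j * int r)" for j
    unfolding W_def U_def using rpos by simp
  have smallU: "\<bar>U i - U (i + 1)\<bar> \<le> \<delta>" for i using small unfolding U_def \<delta>_def by simp
  have smallW: "\<bar>W i - W (i + 1)\<bar> \<le> real r * \<delta>" for i
  proof -
    have "\<bar>U (i * int r) - U (i * int r + int r)\<bar> \<le> real r * \<delta>"
      by (rule tele[where f=U, OF smallU])
    then show ?thesis unfolding WU by (simp add: algebra_simps)
  qed
  have fine: "\<bar>efc Fd (h / real r) (\<Delta>t / real r) U (N * r) (j * int r) - U (j * int r)\<bar>
      \<le> (3 ^ (N * r) - 1) / 2 * \<delta>"
  proof -
    have "cfl Fd (h / real r) (\<Delta>t / real r) U" using cfl_fine unfolding U_def .
    moreover have "h / real r > 0" "\<Delta>t / real r > 0" using h_pos dt_pos rpos by auto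
    ultimately show ?thesis
      using conjunct2[OF efc_bounds[of "h / real r" "\<Delta>t / real r" Fd U \<delta> "N * r", OF _ _ _ smallU]] by simp
  qed
  have coarse: "\<bar>efc Fd h \<Delta>t W N j - W j\<bar> \<le> (3 ^ N - 1) / 2 * (real r * \<delta>)"
  proof -
    have "cfl Fd h \<Delta>t W" using cfl_coarse unfolding W_def .
    then show ?thesis
      using conjunct2[OF efc_bounds[of h \<Delta>t Fd W "real r * \<delta>" N, OF h_pos dt_pos _ smallW]] by simp
  qed
  have dpos: "\<delta> > 0" unfolding \<delta>_def using eps_pos by simp
  have e1: "(3 ^ (N * r) - 1) / 2 * \<delta> \<le> \<epsilon> / 2"
    unfolding \<delta>_def using eps_pos by (simp add: field_simps)
  have pi: "real r * 3 ^ N \<le> 3 ^ (N * r)"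
  proof -
    have "r * 3 ^ N \<le> (3::nat) ^ (N * r)" using pow_ineq N_gt r_ge by simp
    then have "real (r * 3 ^ N) \<le> real ((3::nat) ^ (N * r))" by (rule of_nat_mono)
    then show ?thesis by (simp only: of_nat_mult of_nat_power of_nat_numeral)
  qed
  have e2: "(3 ^ N - 1) / 2 * (real r * \<delta>) \<le> \<epsilon> / 2"
  proof -
    have "(3 ^ N - 1) * (real r * \<delta>) \<le> 3 ^ N * (real r * \<delta>)"
      using dpos rpos by (intro mult_right_mono) simp_all
    also have "\<dots> = (real r * 3 ^ N) * \<delta>" by (simp only: ac_simps)
    also have "\<dots> \<le> 3 ^ (N * r) * \<delta>" using pi dpos by (intro mult_right_mono) auto
    also have "\<dots> = \<epsilon>" unfolding \<delta>_def by simp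
    finally show ?thesis by simp
  qed
  have main: "\<bar>efc Fd h \<Delta>t W N j - efc Fd (h / real r) (\<Delta>t / real r) U (N * r) (j * int r)\<bar> \<le> \<epsilon>"
    using fine coarse e1 e2 WU[of j] by linarith
  show "let w = efc Fd h \<Delta>t (\<lambda>j. u\<^sub>0 (a + real_of_int j * h));
          u = efc Fd (h / real r) (\<Delta>t / real r) (\<lambda>i. u\<^sub>0 (a + real_of_int i * (h / real r)));
          v = herm_v (a + real_of_int j * h) (a + real_of_int (j + 1) * h) (w N j) (w N (j + 1))
      in \<bar>v 0 - u (N * r) (j * int r)\<bar> \<le> \<epsilon> \<and> \<bar>w N j - u (N * r) (j * int r)\<bar> \<le> \<epsilon>"
    using main unfolding Let_def herm_v_def U_def[symmetric] W_def[symmetric] by simp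
qed

end
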